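(* Let $T$ be a supercritical Galton–Watson tree with finite alphabet $\mathbb{A}$ and offspring distribution $W$, let $\mathscr{A}$ be a nonempty collection of nonempty subsets of $\mathbb{A}$, and let $g_{\mathscr{A}}(s)=\mathbb{P}(W^{(s)}\notin\overline{\mathscr{A}})$ for $s\in[0,1]$. If $g_{\mathscr{A}}$ has some fixed point $<1$, then almost surely, conditioned on nonextinction, there exist infinitely many $v\in T$ such that $T^v$ contains an $\mathscr{A}$-subtree.
   Context: Trees with alphabet $\mathbb{A}$ are prefix-closed subsets of $\mathbb{A}^*$ containing the empty word; $W_T(a)=\{i:ai\in T\}$; $T^v=\{j:vj\in T\}$. The Galton–Watson tree with offspring distribution $W$ (random subset of $\mathbb{A}$, $\mathbb{P}(i\in W)>0$ for all $i$) is $T_0=\{\emptyset\}$, $T_n=\{aj:a\in T_{n-1},j\in W_a\}$ with independent copies $W_a$; supercritical means $\mathbb{E}|W|>1$; nonextinction means $T_n\neq\emptyset$ for all $n$. An $\mathscr{A}$-subtree of a tree $S$ is a tree $S'\subseteq S$ with $W_{S'}(a)\in\mathscr{A}$ for all $a\in S'$. $\overline{\mathscr{A}}=\{S\subseteq\mathbb{A}:\exists X\in\mathscr{A}, X\subseteq S\}$. $W^{(s)}=W\cap Y$ with $Y$ independent, $\mathbb{P}(Y=B)=(1-s)^{|B|}s^{|\mathbb{A}\setminus B|}$. *)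

theory Defs
  imports "HOL-Probability.Probability"
begin

definition is_tree :: "'a list set \<Rightarrow> bool" where
  "is_tree S \<longleftrightarrow> [] \<in> S \<and> (\<forall>u v. u @ v \<in> S \<longrightarrow> u \<in> S)"

definition children :: "'a list set \<Rightarrow> 'a list \<Rightarrow> 'a set" where
  "children S a = {i. a @ [i] \<in> S}"

definition subtree_at :: "'a list set \<Rightarrow> 'a list \<Rightarrow> 'a list set" where
  "subtree_at T v = {j. v @ j \<in> T}"

definition is_A_subtree :: "'a set set \<Rightarrow> 'a list set \<Rightarrow> 'a list set \<Rightarrow> bool" where
  "is_A_subtree \<A> S S' \<longleftrightarrow> is_tree S' \<and> S' \<subseteq> S \<and> (\<forall>a\<in>S'. children S' a \<in> \<A>)"

definition up_closure :: "'a set set \<Rightarrow> 'a set set" where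
  "up_closure \<A> = {S. \<exists>X\<in>\<A>. X \<subseteq> S}"

(* Sample space of the Galton-Watson tree: independent copies W_v (v a word) of the offspring
   distribution W, i.e. the infinite product measure. *)
definition GW_space :: "'a set pmf \<Rightarrow> ('a list \<Rightarrow> 'a set) measure" where
  "GW_space W = PiM UNIV (\<lambda>_. measure_pmf W)"

fun GW_gen :: "('a list \<Rightarrow> 'a set) \<Rightarrow> nat \<Rightarrow> 'a list set" where
  "GW_gen \<omega> 0 = {[]}"
| "GW_gen \<omega> (Suc n) = {a @ [j] | a j. a \<in> GW_gen \<omega> n \<and> j \<in> \<omega> a}"

definition GW_tree :: "('a list \<Rightarrow> 'a set) \<Rightarrow> 'a list set" where
  "GW_tree \<omega> = (\<Union>n. GW_gen \<omega> n)"

definition nonextinct :: "('a list \<Rightarrow> 'a set) \<Rightarrow> bool" where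
  "nonextinct \<omega> \<longleftrightarrow> (\<forall>n. GW_gen \<omega> n \<noteq> {})"

definition thin_weight :: "real \<Rightarrow> 'a::finite set \<Rightarrow> real" where
  "thin_weight s B = (1 - s) ^ card B * s ^ card (UNIV - B)"

(* g_\<A>(s) = P(W^(s) \<notin> \<A>-bar), W^(s) = W \<inter> Y with Y independent of W *)
definition g_fun :: "'a::finite set pmf \<Rightarrow> 'a set set \<Rightarrow> real \<Rightarrow> real" where
  "g_fun W \<A> s = (\<Sum>B\<in>UNIV. \<Sum>Y\<in>UNIV. pmf W B * thin_weight s Y *
       (if B \<inter> Y \<notin> up_closure \<A> then 1 else 0))"

end

theory Submission
  imports Defs
begin


definition sh :: "'a list \<Rightarrow> ('a list \<Rightarrow> 'b) \<Rightarrow> ('a list \<Rightarrow> 'b)" where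
  "sh v \<omega> = (\<lambda>w. \<omega> (v @ w))"

lemma sh_Nil[simp]: "sh [] \<omega> = \<omega>" by (simp add: sh_def)
lemma sh_sh[simp]: "sh u (sh v \<omega>) = sh (v @ u) \<omega>" by (simp add: sh_def)
lemma sh_app: "sh v \<omega> w = \<omega> (v @ w)" by (simp add: sh_def)

fun along :: "(('a list \<Rightarrow> 'a set) \<Rightarrow> 'a set) \<Rightarrow> ('a list \<Rightarrow> 'a set) \<Rightarrow> 'a list \<Rightarrow> bool" where
  "along F \<omega> [] = True"
| "along F \<omega> (i # v) = (i \<in> F \<omega> \<and> along F (sh [i] \<omega>) v)"

lemma along_append: "along F \<omega> (u @ w) \<longleftrightarrow> along F \<omega> u \<and> along F (sh u \<omega>) w"
  by (induction u arbitrary: \<omega>) auto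

abbreviation intree :: "('a list \<Rightarrow> 'a set) \<Rightarrow> 'a list \<Rightarrow> bool" where
  "intree \<omega> v \<equiv> along (\<lambda>\<omega>. \<omega> []) \<omega> v"

lemma intree_snoc: "intree \<omega> (a @ [j]) \<longleftrightarrow> intree \<omega> a \<and> j \<in> \<omega> a"
  by (simp add: along_append sh_app)

lemma GW_gen_eq: "GW_gen \<omega> n = {v. length v = n \<and> intree \<omega> v}"
proof (induction n)
  case 0
  show ?case by (auto simp: length_0_conv)
next
  case (Suc n)
  show ?case
  proof (intro set_eqI iffI)
    fix v assume "v \<in> GW_gen \<omega> (Suc n)"
    then obtain a j where aj: "v = a @ [j]" "a \<in> GW_gen \<omega> n" "j \<in> \<omega> a" by auto
    have "length a = n \<and> intree \<omega> a" using aj(2) by (simp add: Suc.IH)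
    then show "v \<in> {v. length v = Suc n \<and> intree \<omega> v}"
      using aj(1,3) intree_snoc[of \<omega> a j] by simp
  next
    fix v assume v: "v \<in> {v. length v = Suc n \<and> intree \<omega> v}"
    then obtain a j where aj: "v = a @ [j]" by (cases v rule: rev_exhaust) auto
    have "length a = n" "intree \<omega> a" "j \<in> \<omega> a" using v aj intree_snoc[of \<omega> a j] by auto
    then have "a \<in> GW_gen \<omega> n" by (simp add: Suc.IH)
    then show "v \<in> GW_gen \<omega> (Suc n)" using aj \<open>j \<in> \<omega> a\<close> by auto
  qed
qed

lemma GW_tree_eq: "GW_tree \<omega> = {v. intree \<omega> v}"
  unfolding GW_tree_def GW_gen_eq by auto

lemma subtree_at_GW: "intree \<omega> v \<Longrightarrow> subtree_at (GW_tree \<omega>) v = GW_tree (sh v \<omega>)"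
  by (auto simp: subtree_at_def GW_tree_eq along_append)

lemma A_subtree_shift:
  assumes "is_A_subtree A S S'" "w \<in> S'"
  shows "is_A_subtree A (subtree_at S w) (subtree_at S' w)"
proof -
  have t: "is_tree S'" "S' \<subseteq> S" "\<forall>a\<in>S'. children S' a \<in> A" using assms(1) by (auto simp: is_A_subtree_def)
  have "is_tree (subtree_at S' w)"
    using t(1) assms(2) unfolding is_tree_def subtree_at_def
    by (metis append.assoc append_Nil2 mem_Collect_eq)
  moreover have "subtree_at S' w \<subseteq> subtree_at S w" using t(2) by (auto simp: subtree_at_def)
  moreover have "\<forall>a\<in>subtree_at S' w. children (subtree_at S' w) a \<in> A"
    using t(3) by (auto simp: subtree_at_def children_def)
  ultimately show ?thesis by (simp add: is_A_subtree_def)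
qed

lemma A_subtree_lengths:
  assumes "is_A_subtree A S S'" "\<And>X. X \<in> A \<Longrightarrow> X \<noteq> {}"
  shows "\<exists>v\<in>S'. length v = n"
proof (induction n)
  case 0
  then show ?case using assms(1) by (auto simp: is_A_subtree_def is_tree_def)
next
  case (Suc n)
  then obtain v where v: "v \<in> S'" "length v = n" by auto
  then have "children S' v \<in> A" using assms(1) by (auto simp: is_A_subtree_def)
  then obtain i where "v @ [i] \<in> S'" using assms(2) by (fastforce simp: children_def)
  then show ?case using v by force
qed

lemma A_subtree_infinite:
  assumes "is_A_subtree A S S'" "\<And>X. X \<in> A \<Longrightarrow> X \<noteq> {}"
  shows "infinite S'"
proof
  assume f: "finite S'"
  obtain v where v: "v \<in> S'" "length v = Suc (Max (length ` S'))"
    using A_subtree_lengths[OF assms] by blast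
  have "length v \<le> Max (length ` S')" using f v by (metis Max_ge finite_imageI imageI)
  then show False using v by simp
qed

lemma infinite_good_set:
  assumes "is_A_subtree A (subtree_at T v0) S'" "\<And>X. X \<in> A \<Longrightarrow> X \<noteq> {}"
  shows "infinite {v \<in> T. \<exists>S'. is_A_subtree A (subtree_at T v) S'}"
proof -
  have inf: "infinite S'" using A_subtree_infinite[OF assms] .
  have "(\<lambda>w. v0 @ w) ` S' \<subseteq> {v \<in> T. \<exists>S'. is_A_subtree A (subtree_at T v) S'}"
  proof
    fix x assume "x \<in> (\<lambda>w. v0 @ w) ` S'"
    then obtain w where w: "w \<in> S'" "x = v0 @ w" by auto
    have "w \<in> subtree_at T v0" using assms(1) w by (auto simp: is_A_subtree_def)
    then have "x \<in> T" using w by (simp add: subtree_at_def)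
    moreover have "subtree_at T x = subtree_at (subtree_at T v0) w"
      using w by (simp add: subtree_at_def)
    ultimately show "x \<in> {v \<in> T. \<exists>S'. is_A_subtree A (subtree_at T v) S'}"
      using A_subtree_shift[OF assms(1) w(1)] by auto
  qed
  moreover have "infinite ((\<lambda>w. v0 @ w) ` S')"
    using inf by (simp add: finite_image_iff inj_on_def)
  ultimately show ?thesis using finite_subset by blast
qed

fun good :: "'a set set \<Rightarrow> nat \<Rightarrow> ('a list \<Rightarrow> 'a set) \<Rightarrow> bool" where
  "good A 0 \<omega> = True"
| "good A (Suc n) \<omega> = ({i \<in> \<omega> []. good A n (sh [i] \<omega>)} \<in> up_closure A)"

lemma up_closure_mono: "X \<in> up_closure A \<Longrightarrow> X \<subseteq> Y \<Longrightarrow> Y \<in> up_closure A"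
  by (auto simp: up_closure_def)

lemma good_Suc_imp: "good A (Suc n) \<omega> \<Longrightarrow> good A n \<omega>"
proof (induction n arbitrary: \<omega>)
  case 0 then show ?case by simp
next
  case (Suc n)
  then show ?case by (auto elim!: up_closure_mono)
qed

lemma good_mono: "m \<le> n \<Longrightarrow> good A n \<omega> \<Longrightarrow> good A m \<omega>"
  by (induction n) (auto simp: le_Suc_eq dest: good_Suc_imp simp del: good.simps)

definition Good :: "'a set set \<Rightarrow> ('a list \<Rightarrow> 'a set) \<Rightarrow> bool" where
  "Good A \<omega> \<longleftrightarrow> (\<forall>n. good A n \<omega>)"

lemma Good_children:
  fixes \<omega> :: "'a::finite list \<Rightarrow> 'a set"
  assumes "Good A \<omega>"
  shows "{i \<in> \<omega> []. Good A (sh [i] \<omega>)} \<in> up_closure A"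
proof -
  define bad where "bad = {i \<in> \<omega> []. \<not> Good A (sh [i] \<omega>)}"
  have "\<forall>i\<in>bad. \<exists>n. \<not> good A n (sh [i] \<omega>)" by (auto simp: bad_def Good_def)
  then obtain nn where nn: "\<And>i. i \<in> bad \<Longrightarrow> \<not> good A (nn i) (sh [i] \<omega>)" by metis
  define N where "N = (\<Sum>i\<in>bad. nn i)"
  have le: "i \<in> bad \<Longrightarrow> nn i \<le> N" for i
    unfolding N_def by (rule member_le_sum) auto
  have C: "{i \<in> \<omega> []. good A N (sh [i] \<omega>)} \<in> up_closure A"
    using assms by (auto simp: Good_def simp del: good.simps intro: good.simps(2)[THEN iffD1])
  show ?thesis
  proof (rule up_closure_mono[OF C], safe)
    fix i assume i: "i \<in> \<omega> []" "good A N (sh [i] \<omega>)"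
    show "Good A (sh [i] \<omega>)"
    proof (rule ccontr)
      assume "\<not> Good A (sh [i] \<omega>)"
      then have "i \<in> bad" using i by (auto simp: bad_def)
      then show False using nn le good_mono i by blast
    qed
  qed
qed

definition Xch :: "'a set set \<Rightarrow> ('a list \<Rightarrow> 'a set) \<Rightarrow> 'a set" where
  "Xch A \<omega> = (SOME X. X \<in> A \<and> X \<subseteq> {i \<in> \<omega> []. Good A (sh [i] \<omega>)})"

lemma Xch:
  fixes \<omega> :: "'a::finite list \<Rightarrow> 'a set"
  assumes "Good A \<omega>"
  shows "Xch A \<omega> \<in> A \<and> Xch A \<omega> \<subseteq> {i \<in> \<omega> []. Good A (sh [i] \<omega>)}"
proof -
  have "\<exists>X. X \<in> A \<and> X \<subseteq> {i \<in> \<omega> []. Good A (sh [i] \<omega>)}"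
    using Good_children[OF assms] by (auto simp: up_closure_def)
  then show ?thesis unfolding Xch_def by (rule someI_ex)
qed

lemma path_Good:
  fixes \<omega> :: "'a::finite list \<Rightarrow> 'a set"
  shows "Good A \<omega> \<Longrightarrow> along (Xch A) \<omega> v \<Longrightarrow> Good A (sh v \<omega>) \<and> intree \<omega> v"
proof (induction v arbitrary: \<omega>)
  case Nil then show ?case by simp
next
  case (Cons i v)
  then have "i \<in> Xch A \<omega>" "along (Xch A) (sh [i] \<omega>) v" by auto
  then have "i \<in> \<omega> []" "Good A (sh [i] \<omega>)" using Xch[OF Cons(2)] by auto
  then show ?case using Cons.IH[of "sh [i] \<omega>"] \<open>along (Xch A) (sh [i] \<omega>) v\<close> by simp
qed

lemma Good_subtree:
  fixes \<omega> :: "'a::finite list \<Rightarrow> 'a set"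
  assumes "Good A \<omega>"
  shows "is_A_subtree A (GW_tree \<omega>) {v. along (Xch A) \<omega> v}"
proof -
  have "is_tree {v. along (Xch A) \<omega> v}"
    by (auto simp: is_tree_def along_append)
  moreover have "{v. along (Xch A) \<omega> v} \<subseteq> GW_tree \<omega>"
    using path_Good[OF assms] by (auto simp: GW_tree_eq)
  moreover have "children {v. along (Xch A) \<omega> v} a \<in> A" if "along (Xch A) \<omega> a" for a
  proof -
    have "children {v. along (Xch A) \<omega> v} a = Xch A (sh a \<omega>)"
      using that by (auto simp: children_def along_append)
    then show ?thesis using Xch[of A "sh a \<omega>"] path_Good[OF assms that] by simp
  qed
  ultimately show ?thesis by (auto simp: is_A_subtree_def)
qed

lemma good_nonempty:
  assumes "\<And>X. X \<in> A \<Longrightarrow> X \<noteq> {}"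
  shows "good A n \<omega> \<Longrightarrow> \<exists>v. length v = n \<and> intree \<omega> v"
proof (induction n arbitrary: \<omega>)
  case 0 then show ?case by auto
next
  case (Suc n)
  then obtain X where "X \<in> A" "X \<subseteq> {i \<in> \<omega> []. good A n (sh [i] \<omega>)}" by (auto simp: up_closure_def)
  then obtain i where "i \<in> \<omega> []" "good A n (sh [i] \<omega>)" using assms by blast
  then obtain v where "length v = n" "intree (sh [i] \<omega>) v" using Suc.IH by blast
  then show ?case using \<open>i \<in> \<omega> []\<close> by (intro exI[of _ "i # v"]) auto
qed



definition Phi :: "'a set \<Rightarrow> 'a set set \<Rightarrow> real \<Rightarrow> real" where
  "Phi I U s = (\<Sum>Y\<in>Pow I. (1 - s) ^ card Y * s ^ card (I - Y) * (if Y \<in> U then 1 else 0))"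

lemma Phi_insert:
  assumes "finite I" "a \<notin> I"
  shows "Phi (insert a I) U s = s * Phi I U s + (1 - s) * Phi I {Y. insert a Y \<in> U} s"
proof -
  have disj: "Pow I \<inter> insert a ` Pow I = {}" using assms(2) by auto
  have inj: "inj_on (insert a) (Pow I)" using assms(2) unfolding inj_on_def by (metis PowD insert_ident subset_iff)
  have fin: "finite (Pow I)" "finite (insert a ` Pow I)" using assms(1) by auto
  have 1: "(\<Sum>Y\<in>Pow I. (1 - s) ^ card Y * s ^ card (insert a I - Y) * (if Y \<in> U then 1 else 0))
        = s * Phi I U s"
    unfolding Phi_def sum_distrib_left
  proof (rule sum.cong[OF refl])
    fix Y assume Y: "Y \<in> Pow I"
    have "insert a I - Y = insert a (I - Y)" using Y assms(2) by auto
    then have "card (insert a I - Y) = Suc (card (I - Y))" using assms by (simp add: finite_subset)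
    then show "(1 - s) ^ card Y * s ^ card (insert a I - Y) * (if Y \<in> U then 1 else 0) =
          s * ((1 - s) ^ card Y * s ^ card (I - Y) * (if Y \<in> U then 1 else 0))" by simp
  qed
  have 2: "(\<Sum>Y\<in>insert a ` Pow I. (1 - s) ^ card Y * s ^ card (insert a I - Y) * (if Y \<in> U then 1 else 0))
        = (1 - s) * Phi I {Y. insert a Y \<in> U} s"
    unfolding Phi_def sum_distrib_left sum.reindex[OF inj] o_def
  proof (rule sum.cong[OF refl])
    fix Y assume Y: "Y \<in> Pow I"
    have "insert a I - insert a Y = I - Y" using Y assms(2) by auto
    moreover have "card (insert a Y) = Suc (card Y)" using Y assms by (metis PowD card_insert_disjoint finite_subset subsetD)
    ultimately show "(1 - s) ^ card (insert a Y) * s ^ card (insert a I - insert a Y) * (if insert a Y \<in> U then 1 else 0) =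
          (1 - s) * ((1 - s) ^ card Y * s ^ card (I - Y) * (if Y \<in> {Y. insert a Y \<in> U} then 1 else 0))"
      by simp
  qed
  show ?thesis
    unfolding Phi_def[of "insert a I"] Pow_insert sum.union_disjoint[OF fin disj]
    using 1 2 by simp
qed

lemma Phi_subset:
  assumes "finite I" "U' \<subseteq> U" "0 \<le> s" "s \<le> 1"
  shows "Phi I U' s \<le> Phi I U s"
  unfolding Phi_def using assms by (intro sum_mono mult_left_mono) auto

lemma Phi_mono:
  assumes "finite I"
  shows "(\<And>Y Y'. Y \<in> U \<Longrightarrow> Y' \<subseteq> Y \<Longrightarrow> Y' \<in> U) \<Longrightarrow> 0 \<le> s \<Longrightarrow> s \<le> t \<Longrightarrow> t \<le> 1 \<Longrightarrow>
     Phi I U s \<le> Phi I U t"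
  using assms
proof (induction I arbitrary: U rule: finite_induct)
  case empty
  show ?case by (simp add: Phi_def)
next
  case (insert a I)
  have ds: "Y' \<in> U" if "Y \<in> U" "Y' \<subseteq> Y" for Y Y' by (rule insert.prems(1)[OF that])
  have st: "0 \<le> s" "s \<le> t" "t \<le> 1" by (rule insert.prems(2), rule insert.prems(3), rule insert.prems(4))
  define Ua where "Ua = {Y. insert a Y \<in> U}"
  have dUa: "Y' \<in> Ua" if "Y \<in> Ua" "Y' \<subseteq> Y" for Y Y'
  proof -
    have "insert a Y \<in> U" using that(1) by (simp add: Ua_def)
    moreover have "insert a Y' \<subseteq> insert a Y" using that(2) by blast
    ultimately have "insert a Y' \<in> U" by (rule ds)
    then show ?thesis by (simp add: Ua_def)
  qed
  have sub: "Ua \<subseteq> U"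
  proof
    fix Y assume "Y \<in> Ua"
    then have "insert a Y \<in> U" by (simp add: Ua_def)
    moreover have "Y \<subseteq> insert a Y" by blast
    ultimately show "Y \<in> U" by (rule ds)
  qed
  have m1: "Phi I U s \<le> Phi I U t" by (rule insert.IH[OF ds st])
  have m2: "Phi I Ua s \<le> Phi I Ua t" by (rule insert.IH[OF dUa st])
  have m3: "Phi I Ua t \<le> Phi I U t" by (rule Phi_subset[OF insert(1) sub]) (use st in linarith)+
  have "s * Phi I U s + (1 - s) * Phi I Ua s \<le> s * Phi I U t + (1 - s) * Phi I Ua t"
    using m1 m2 st by (intro add_mono mult_left_mono) auto
  also have "\<dots> \<le> t * Phi I U t + (1 - t) * Phi I Ua t"
  proof -
    have "0 \<le> (t - s) * (Phi I U t - Phi I Ua t)" using m3 st by simp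
    then show ?thesis by (simp add: algebra_simps)
  qed
  finally show ?case using Phi_insert[OF insert(1,2)] unfolding Ua_def by simp
qed

lemma g_fun_Phi:
  fixes W :: "'a::finite set pmf"
  shows "g_fun W A s = (\<Sum>B\<in>UNIV. pmf W B * Phi UNIV {Y. B \<inter> Y \<notin> up_closure A} s)"
  unfolding g_fun_def Phi_def thin_weight_def sum_distrib_left Pow_UNIV
  by (intro sum.cong refl) (simp add: mult.assoc)

lemma g_fun_mono:
  fixes W :: "'a::finite set pmf"
  assumes "0 \<le> s" "s \<le> t" "t \<le> 1"
  shows "g_fun W A s \<le> g_fun W A t"
  unfolding g_fun_Phi
proof (intro sum_mono mult_left_mono)
  fix B :: "'a set"
  show "Phi UNIV {Y. B \<inter> Y \<notin> up_closure A} s \<le> Phi UNIV {Y. B \<inter> Y \<notin> up_closure A} t"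
  proof (rule Phi_mono)
    fix Y Y' assume "Y \<in> {Y. B \<inter> Y \<notin> up_closure A}" "Y' \<subseteq> Y"
    then show "Y' \<in> {Y. B \<inter> Y \<notin> up_closure A}" by (auto simp: up_closure_def)
  qed (use assms in auto)
qed simp

lemma gen_fun_fixpoint:
  fixes p :: "'b \<Rightarrow> real" and k :: "'b \<Rightarrow> nat"
  assumes S: "finite S" and p: "\<And>B. B \<in> S \<Longrightarrow> 0 \<le> p B" and sum1: "(\<Sum>B\<in>S. p B) = 1"
    and b: "b \<in> S" "p b > 0" "k b \<ge> 2"
    and x: "0 \<le> x" "x < 1" "x \<le> (\<Sum>B\<in>S. p B * x ^ k B)"
    and d: "0 \<le> d" "(\<Sum>B\<in>S. p B * d ^ k B) = d"
  shows "x \<le> d"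
proof (rule ccontr)
  assume "\<not> x \<le> d"
  then have dx: "d < x" by simp
  define \<sigma> where "\<sigma> = (\<lambda>n (a::real) c. \<Sum>i<n. a ^ (n - Suc i) * c ^ i)"
  have pd: "c ^ n - a ^ n = (c - a) * \<sigma> n a c" for a c :: real and n
    unfolding \<sigma>_def by (rule power_diff_sumr2)
  have "x - d \<le> (\<Sum>B\<in>S. p B * x ^ k B) - (\<Sum>B\<in>S. p B * d ^ k B)" using x d by simp
  also have "\<dots> = (\<Sum>B\<in>S. p B * (x ^ k B - d ^ k B))"
    by (simp add: sum_subtractf algebra_simps)
  also have "\<dots> = (x - d) * (\<Sum>B\<in>S. p B * \<sigma> (k B) d x)"
  proof -
    have e2: "p B * (x ^ k B - d ^ k B) = (x - d) * (p B * \<sigma> (k B) d x)" for B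
    proof -
      have "x ^ k B - d ^ k B = (x - d) * \<sigma> (k B) d x" by (rule pd)
      then have "p B * (x ^ k B - d ^ k B) = p B * ((x - d) * \<sigma> (k B) d x)" by (rule arg_cong)
      then show ?thesis by (simp only: ac_simps)
    qed
    show ?thesis unfolding sum_distrib_left e2 ..
  qed
  finally have "(x - d) * 1 \<le> (x - d) * (\<Sum>B\<in>S. p B * \<sigma> (k B) d x)" by simp
  then have L: "1 \<le> (\<Sum>B\<in>S. p B * \<sigma> (k B) d x)" using dx by (simp add: mult_le_cancel_left)
  have e: "(1 - x) * (p B * \<sigma> (k B) x 1) = p B * (1 ^ k B - x ^ k B)" for B
  proof -
    have "1 ^ k B - x ^ k B = (1 - x) * \<sigma> (k B) x 1" by (rule pd)
    then have "p B * (1 ^ k B - x ^ k B) = p B * ((1 - x) * \<sigma> (k B) x 1)" by (rule arg_cong)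
    then show ?thesis by (simp only: ac_simps)
  qed
  have "(1 - x) * (\<Sum>B\<in>S. p B * \<sigma> (k B) x 1) = (\<Sum>B\<in>S. p B * (1 ^ k B - x ^ k B))"
    unfolding sum_distrib_left e ..
  also have "\<dots> = (\<Sum>B\<in>S. p B) - (\<Sum>B\<in>S. p B * x ^ k B)"
    by (simp add: sum_subtractf[symmetric] algebra_simps)
  also have "\<dots> = 1 - (\<Sum>B\<in>S. p B * x ^ k B)"
    using sum1 by simp
  also have "\<dots> \<le> (1 - x) * 1" using x by simp
  finally have R: "(\<Sum>B\<in>S. p B * \<sigma> (k B) x 1) \<le> 1" using x by (simp add: mult_le_cancel_left)
  have le: "\<sigma> n d x \<le> \<sigma> n x 1" for n
    unfolding \<sigma>_def
  proof (intro sum_mono)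
    fix i assume "i \<in> {..<n}"
    have "d ^ (n - Suc i) \<le> x ^ (n - Suc i)" using d dx by (intro power_mono) auto
    moreover have "x ^ i \<le> 1" using x by (simp add: power_le_one)
    ultimately have "d ^ (n - Suc i) * x ^ i \<le> x ^ (n - Suc i) * 1"
      using d x by (intro mult_mono) auto
    then show "d ^ (n - Suc i) * x ^ i \<le> x ^ (n - Suc i) * 1 ^ i" by simp
  qed
  have lt: "\<sigma> n d x < \<sigma> n x 1" if n: "n \<ge> 2" for n
    unfolding \<sigma>_def
  proof (rule sum_strict_mono_ex1)
    show "finite {..<n}" by simp
    show "\<forall>i\<in>{..<n}. d ^ (n - Suc i) * x ^ i \<le> x ^ (n - Suc i) * 1 ^ i"
    proof
      fix i assume "i \<in> {..<n}"
      have "d ^ (n - Suc i) \<le> x ^ (n - Suc i)" using d dx by (intro power_mono) auto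
      moreover have "x ^ i \<le> 1" using x by (simp add: power_le_one)
      ultimately have "d ^ (n - Suc i) * x ^ i \<le> x ^ (n - Suc i) * 1"
        using d x by (intro mult_mono) auto
      then show "d ^ (n - Suc i) * x ^ i \<le> x ^ (n - Suc i) * 1 ^ i" by simp
    qed
    have "x ^ (n - 1) < 1" using x n by (simp add: power_less_one_iff)
    then show "\<exists>i\<in>{..<n}. d ^ (n - Suc i) * x ^ i < x ^ (n - Suc i) * 1 ^ i"
      using n by (intro bexI[of _ "n - 1"]) auto
  qed
  have "(\<Sum>B\<in>S. p B * \<sigma> (k B) d x) < (\<Sum>B\<in>S. p B * \<sigma> (k B) x 1)"
  proof (rule sum_strict_mono_ex1[OF S])
    show "\<forall>B\<in>S. p B * \<sigma> (k B) d x \<le> p B * \<sigma> (k B) x 1"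
      using p le by (auto intro: mult_left_mono)
    show "\<exists>B\<in>S. p B * \<sigma> (k B) d x < p B * \<sigma> (k B) x 1"
      using b lt[of "k b"] by (intro bexI[of _ b]) auto
  qed
  then show False using L R by simp
qed



lemma GW_prob: "prob_space (GW_space W)"
  unfolding GW_space_def by (rule prob_space_PiM) (simp add: prob_space_measure_pmf)

lemma space_GW: "space (GW_space W) = UNIV"
  unfolding GW_space_def space_PiM by (simp add: PiE_UNIV_domain)

lemma comp_meas: "(\<lambda>\<omega>. \<omega> v) \<in> GW_space W \<rightarrow>\<^sub>M measure_pmf W"
  unfolding GW_space_def by (rule measurable_component_singleton) simp

lemma pred_sets: "{\<omega>. P (\<omega> v)} \<in> sets (GW_space W)"
proof -
  have "(\<lambda>\<omega>. \<omega> v) -` {B. P B} \<inter> space (GW_space W) \<in> sets (GW_space W)"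
    by (rule measurable_sets[OF comp_meas]) simp
  then show ?thesis by (simp add: space_GW vimage_def)
qed

lemma sh_meas: "sh v \<in> GW_space W \<rightarrow>\<^sub>M GW_space W"
proof -
  have "(\<lambda>\<omega> w. \<omega> (v @ w)) \<in> GW_space W \<rightarrow>\<^sub>M GW_space W"
    unfolding GW_space_def
    by (rule measurable_PiM_single') (auto intro: measurable_component_singleton)
  moreover have e: "sh v = (\<lambda>\<omega> w. \<omega> (v @ w))" by (auto simp: sh_def)
  ultimately show ?thesis by (subst e)
qed

lemma sh_sets: "S \<in> sets (GW_space W) \<Longrightarrow> {\<omega>. sh v \<omega> \<in> S} \<in> sets (GW_space W)"
  using measurable_sets[OF sh_meas, of S W v] by (simp add: space_GW vimage_def)

definition M2 :: "'a set pmf \<Rightarrow> ('a set \<times> ('a \<Rightarrow> 'a list \<Rightarrow> 'a set)) measure" where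
  "M2 W = measure_pmf W \<Otimes>\<^sub>M PiM UNIV (\<lambda>_. GW_space W)"

definition Psi :: "'a set \<times> ('a \<Rightarrow> 'a list \<Rightarrow> 'a set) \<Rightarrow> 'a list \<Rightarrow> 'a set" where
  "Psi x = (\<lambda>v. case v of [] \<Rightarrow> fst x | i # w \<Rightarrow> snd x i w)"

lemma space_PiGW: "space (PiM UNIV (\<lambda>_::'a. GW_space W)) = UNIV"
  unfolding space_PiM by (simp add: PiE_UNIV_domain space_GW)

lemma space_M2: "space (M2 W) = UNIV"
  unfolding M2_def space_pair_measure space_PiGW by simp

lemma Psi_meas: "Psi \<in> M2 W \<rightarrow>\<^sub>M GW_space W"
proof -
  have "(\<lambda>x. Psi x v) \<in> M2 W \<rightarrow>\<^sub>M measure_pmf W" for v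
  proof (cases v)
    case Nil
    then have "(\<lambda>x. Psi x v) = fst" by (auto simp: Psi_def)
    then show ?thesis unfolding M2_def by (simp add: measurable_fst)
  next
    case (Cons i w)
    then have e: "(\<lambda>x. Psi x v) = (\<lambda>F. F w) \<circ> (\<lambda>G. G i) \<circ> snd" by (auto simp: Psi_def)
    have a: "(\<lambda>G. G i) \<in> PiM UNIV (\<lambda>_. GW_space W) \<rightarrow>\<^sub>M GW_space W"
      by (rule measurable_component_singleton) simp
    have b: "(\<lambda>F. F w) \<circ> (\<lambda>G. G i) \<in> PiM UNIV (\<lambda>_. GW_space W) \<rightarrow>\<^sub>M measure_pmf W"
      by (rule measurable_comp[OF a comp_meas])
    have "(\<lambda>F. F w) \<circ> (\<lambda>G. G i) \<circ> snd \<in> M2 W \<rightarrow>\<^sub>M measure_pmf W"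
      unfolding M2_def by (rule measurable_comp[OF measurable_snd b])
    then show ?thesis using e by simp
  qed
  then have "(\<lambda>x v. Psi x v) \<in> M2 W \<rightarrow>\<^sub>M GW_space W"
    unfolding GW_space_def by (intro measurable_PiM_single') auto
  then show ?thesis by simp
qed

lemma prod_emb_UNIV: "prod_emb UNIV (\<lambda>_. measure_pmf W) J (Pi\<^sub>E J A) = {\<omega>. \<forall>v\<in>J. \<omega> v \<in> A v}"
  by (auto simp: prod_emb_def PiE_def extensional_def restrict_def Pi_iff)

lemma prod_list_split:
  fixes f :: "'a::finite list \<Rightarrow> 'c::comm_monoid_mult"
  assumes J: "finite J"
  shows "(\<Prod>v\<in>J. f v) = (if [] \<in> J then f [] else 1) * (\<Prod>i\<in>UNIV. \<Prod>w\<in>{w. i # w \<in> J}. f (i # w))"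
proof -
  have finJi: "finite {w. i # w \<in> J}" for i
    using finite_vimageI[OF J, of "Cons i"] by (simp add: vimage_def)
  have 1: "(\<Prod>v\<in>J. f v) = (if [] \<in> J then f [] else 1) * (\<Prod>v\<in>J - {[]}. f v)"
    using J by (cases "[] \<in> J") (auto simp: prod.remove)
  have bij: "bij_betw (\<lambda>(i, w). i # w) (SIGMA i:UNIV. {w. i # w \<in> J}) (J - {[]})"
  proof (rule bij_betwI')
    show "\<And>x y. x \<in> (SIGMA i:UNIV. {w. i # w \<in> J}) \<Longrightarrow> y \<in> (SIGMA i:UNIV. {w. i # w \<in> J}) \<Longrightarrow>
        ((case x of (i, w) \<Rightarrow> i # w) = (case y of (i, w) \<Rightarrow> i # w)) = (x = y)" by auto
    show "\<And>x. x \<in> (SIGMA i:UNIV. {w. i # w \<in> J}) \<Longrightarrow> (case x of (i, w) \<Rightarrow> i # w) \<in> J - {[]}" by auto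
    show "\<exists>x\<in>(SIGMA i:UNIV. {w. i # w \<in> J}). y = (case x of (i, w) \<Rightarrow> i # w)" if "y \<in> J - {[]}" for y
      using that by (intro bexI[of _ "(hd y, tl y)"]) auto
  qed
  have "(\<Prod>v\<in>J - {[]}. f v) = (\<Prod>x\<in>(SIGMA i:UNIV. {w. i # w \<in> J}). f ((\<lambda>(i, w). i # w) x))"
    by (rule prod.reindex_bij_betw[OF bij, symmetric])
  also have "\<dots> = (\<Prod>(i, w)\<in>(SIGMA i:UNIV. {w. i # w \<in> J}). f (i # w))"
    by (rule prod.cong) auto
  also have "\<dots> = (\<Prod>i\<in>UNIV. \<Prod>w\<in>{w. i # w \<in> J}. f (i # w))"
    by (rule prod.Sigma[symmetric]) (auto simp: finJi)
  finally show ?thesis using 1 by simp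
qed

lemma distr_Psi:
  fixes W :: "'a::finite set pmf"
  shows "distr (M2 W) (GW_space W) Psi = GW_space W"
proof -
  interpret G: prob_space "GW_space W" by (rule GW_prob)
  have pW: "prob_space (measure_pmf W)" by (rule prob_space_measure_pmf)
  have "GW_space W = distr (M2 W) (GW_space W) Psi"
  proof (rule measure_eqI_PiM_infinite[where I=UNIV and M="\<lambda>_. measure_pmf W"])
    show "sets (GW_space W) = sets (PiM UNIV (\<lambda>_. measure_pmf W))" by (simp add: GW_space_def)
    show "sets (distr (M2 W) (GW_space W) Psi) = sets (PiM UNIV (\<lambda>_. measure_pmf W))" by (simp add: GW_space_def)
    show "finite_measure (GW_space W)" by (rule G.finite_measure_axioms)
  next
    fix J :: "'a list set" and A assume J: "finite J" "J \<subseteq> UNIV"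
      and A: "\<And>i. i \<in> J \<Longrightarrow> A i \<in> sets (measure_pmf W)"
    let ?X = "prod_emb UNIV (\<lambda>_. measure_pmf W) J (Pi\<^sub>E J A)"
    have Xs: "?X \<in> sets (GW_space W)" unfolding GW_space_def by (rule sets_PiM_I) (use J in auto)
    have L: "emeasure (GW_space W) ?X = (\<Prod>v\<in>J. emeasure (measure_pmf W) (A v))"
      unfolding GW_space_def by (rule emeasure_PiM_emb) (use J pW in auto)
    define Ji where "Ji i = {w. i # w \<in> J}" for i
    have finJi: "finite (Ji i)" for i
      using finite_vimageI[OF J(1), of "Cons i"] by (simp add: vimage_def Ji_def)
    define A0 where "A0 = (if [] \<in> J then A [] else UNIV)"
    define Ci where "Ci i = {F. \<forall>w\<in>Ji i. F w \<in> A (i # w)}" for i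
    have pre: "Psi -` ?X \<inter> space (M2 W) = A0 \<times> PiE UNIV Ci"
    proof (intro set_eqI iffI)
      fix x assume "x \<in> Psi -` ?X \<inter> space (M2 W)"
      then have x: "\<forall>v\<in>J. Psi x v \<in> A v" by (simp add: prod_emb_UNIV)
      show "x \<in> A0 \<times> PiE UNIV Ci"
      proof (cases x)
        case (Pair B F)
        have "B \<in> A0" using x[rule_format, of "[]"] by (auto simp: A0_def Pair Psi_def)
        moreover have "F i \<in> Ci i" for i
          using x by (auto simp: Ci_def Ji_def Pair Psi_def)
        ultimately show ?thesis by (simp add: Pair PiE_UNIV_domain)
      qed
    next
      fix x assume x: "x \<in> A0 \<times> PiE UNIV Ci"
      have "Psi x v \<in> A v" if "v \<in> J" for v
      proof (cases v)
        case Nil then show ?thesis using x that by (auto simp: A0_def Psi_def)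
      next
        case (Cons i w)
        then have "snd x i \<in> Ci i" using x by (auto simp: PiE_UNIV_domain)
        then show ?thesis using that Cons by (auto simp: Ci_def Ji_def Psi_def)
      qed
      then show "x \<in> Psi -` ?X \<inter> space (M2 W)" by (simp add: prod_emb_UNIV space_M2)
    qed
    have Ci_eq: "Ci i = prod_emb UNIV (\<lambda>_. measure_pmf W) (Ji i) (PiE (Ji i) (\<lambda>w. A (i # w)))" for i
      by (simp add: prod_emb_UNIV Ci_def)
    have Ci_sets: "Ci i \<in> sets (GW_space W)" for i
      unfolding Ci_eq GW_space_def by (rule sets_PiM_I) (use finJi in auto)
    have Ci_meas: "emeasure (GW_space W) (Ci i) = (\<Prod>w\<in>Ji i. emeasure (measure_pmf W) (A (i # w)))" for i
      unfolding Ci_eq GW_space_def by (rule emeasure_PiM_emb) (use finJi pW in auto)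
    have sfP: "sigma_finite_measure (PiM UNIV (\<lambda>_::'a. GW_space W))"
      by (rule prob_space_imp_sigma_finite[OF prob_space_PiM[OF GW_prob]])
    have psf: "product_sigma_finite (\<lambda>_::'a. GW_space W)"
      unfolding product_sigma_finite_def by (auto intro: prob_space_imp_sigma_finite GW_prob)
    have "emeasure (distr (M2 W) (GW_space W) Psi) ?X = emeasure (M2 W) (A0 \<times> PiE UNIV Ci)"
      using emeasure_distr[OF Psi_meas Xs] pre by simp
    also have "\<dots> = emeasure (measure_pmf W) A0 * emeasure (PiM UNIV (\<lambda>_. GW_space W)) (PiE UNIV Ci)"
      unfolding M2_def
      by (rule sigma_finite_measure.emeasure_pair_measure_Times[OF sfP])
         (auto intro!: sets_PiM_I_finite Ci_sets)
    also have "emeasure (PiM UNIV (\<lambda>_. GW_space W)) (PiE UNIV Ci) = (\<Prod>i\<in>UNIV. emeasure (GW_space W) (Ci i))"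
      by (rule product_sigma_finite.emeasure_PiM[OF psf]) (auto intro: Ci_sets)
    also have "emeasure (measure_pmf W) A0 = (if [] \<in> J then emeasure (measure_pmf W) (A []) else 1)"
      by (simp add: A0_def measure_pmf.emeasure_space_1[simplified])
    finally have R: "emeasure (distr (M2 W) (GW_space W) Psi) ?X =
        (if [] \<in> J then emeasure (measure_pmf W) (A []) else 1) *
        (\<Prod>i\<in>UNIV. \<Prod>w\<in>Ji i. emeasure (measure_pmf W) (A (i # w)))"
      by (simp add: Ci_meas)
    show "emeasure (GW_space W) ?X = emeasure (distr (M2 W) (GW_space W) Psi) ?X"
      unfolding L R Ji_def by (rule prod_list_split[OF J(1)])
  qed
  then show ?thesis by simp
qed



lemma sh_Psi: "sh [i] (Psi x) = snd x i"
  by (auto simp: sh_def Psi_def)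

lemma Psi_Nil: "Psi x [] = fst x"
  by (simp add: Psi_def)

definition cyl :: "'a set \<Rightarrow> ('a \<Rightarrow> ('a list \<Rightarrow> 'a set) set) \<Rightarrow> ('a list \<Rightarrow> 'a set) set" where
  "cyl B C = {\<omega>. \<omega> [] = B \<and> (\<forall>i. sh [i] \<omega> \<in> C i)}"

lemma cyl_sets:
  fixes W :: "'a::finite set pmf"
  assumes "\<And>i. C i \<in> sets (GW_space W)"
  shows "cyl B C \<in> sets (GW_space W)"
proof -
  have e: "cyl B C = {\<omega>. \<omega> [] = B} \<inter> (\<Inter>i\<in>UNIV. {\<omega>. sh [i] \<omega> \<in> C i})"
    by (auto simp: cyl_def)
  show ?thesis unfolding e
    by (intro sets.Int pred_sets sets.finite_INT sh_sets assms) auto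
qed

lemma cyl_measure:
  fixes W :: "'a::finite set pmf"
  assumes C: "\<And>i. C i \<in> sets (GW_space W)"
  shows "measure (GW_space W) (cyl B C) = pmf W B * (\<Prod>i\<in>UNIV. measure (GW_space W) (C i))"
proof -
  interpret G: prob_space "GW_space W" by (rule GW_prob)
  have Ss: "cyl B C \<in> sets (GW_space W)" by (rule cyl_sets[OF C])
  have pre: "Psi -` cyl B C \<inter> space (M2 W) = {B} \<times> PiE UNIV C"
    by (auto simp: space_M2 PiE_UNIV_domain sh_Psi Psi_Nil cyl_def)
  have sfP: "sigma_finite_measure (PiM UNIV (\<lambda>_::'a. GW_space W))"
    by (rule prob_space_imp_sigma_finite[OF prob_space_PiM[OF GW_prob]])
  have psf: "product_sigma_finite (\<lambda>_::'a. GW_space W)"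
    unfolding product_sigma_finite_def by (auto intro: prob_space_imp_sigma_finite GW_prob)
  have nn: "0 \<le> pmf W B * (\<Prod>i\<in>UNIV. measure (GW_space W) (C i))"
    by (intro mult_nonneg_nonneg prod_nonneg) auto
  have "emeasure (GW_space W) (cyl B C) = emeasure (distr (M2 W) (GW_space W) Psi) (cyl B C)"
    using distr_Psi[of W] by simp
  also have "\<dots> = emeasure (M2 W) ({B} \<times> PiE UNIV C)"
    using emeasure_distr[OF Psi_meas Ss] pre by simp
  also have "\<dots> = emeasure (measure_pmf W) {B} * emeasure (PiM UNIV (\<lambda>_. GW_space W)) (PiE UNIV C)"
    unfolding M2_def
    by (rule sigma_finite_measure.emeasure_pair_measure_Times[OF sfP])
       (auto intro!: sets_PiM_I_finite C)
  also have "emeasure (PiM UNIV (\<lambda>_. GW_space W)) (PiE UNIV C) = (\<Prod>i\<in>UNIV. emeasure (GW_space W) (C i))"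
    by (rule product_sigma_finite.emeasure_PiM[OF psf]) (auto intro: C)
  also have "\<dots> = (\<Prod>i\<in>UNIV. ennreal (measure (GW_space W) (C i)))"
    by (simp add: G.emeasure_eq_measure)
  also have "\<dots> = ennreal (\<Prod>i\<in>UNIV. measure (GW_space W) (C i))"
    by (rule prod_ennreal) auto
  also have "emeasure (measure_pmf W) {B} = ennreal (pmf W B)"
    by (simp add: emeasure_pmf_single)
  finally have "emeasure (GW_space W) (cyl B C) = ennreal (pmf W B) * ennreal (\<Prod>i\<in>UNIV. measure (GW_space W) (C i))" .
  also have "\<dots> = ennreal (pmf W B * (\<Prod>i\<in>UNIV. measure (GW_space W) (C i)))"
    by (rule ennreal_mult[symmetric]) (auto intro: prod_nonneg)
  finally have "emeasure (GW_space W) (cyl B C) = ennreal (pmf W B * (\<Prod>i\<in>UNIV. measure (GW_space W) (C i)))" .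
  then show ?thesis using nn by (simp add: measure_def)
qed

lemma cyl_union_measure:
  fixes W :: "'a::finite set pmf"
  assumes K: "finite K" and C: "\<And>k i. C k i \<in> sets (GW_space W)"
    and disj: "disjoint_family_on (\<lambda>k. cyl (\<beta> k) (C k)) K"
  shows "measure (GW_space W) (\<Union>k\<in>K. cyl (\<beta> k) (C k)) =
         (\<Sum>k\<in>K. pmf W (\<beta> k) * (\<Prod>i\<in>UNIV. measure (GW_space W) (C k i)))"
proof -
  interpret G: prob_space "GW_space W" by (rule GW_prob)
  have "measure (GW_space W) (\<Union>k\<in>K. cyl (\<beta> k) (C k)) = (\<Sum>k\<in>K. measure (GW_space W) (cyl (\<beta> k) (C k)))"
    by (rule G.finite_measure_finite_Union[OF K _ disj]) (auto intro: cyl_sets C)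
  then show ?thesis by (simp add: cyl_measure C)
qed

lemma E1:
  fixes W :: "'a::finite set pmf"
  assumes A: "A \<in> sets (GW_space W)"
  shows "{\<omega>. \<forall>i\<in>\<omega> []. sh [i] \<omega> \<in> A} \<in> sets (GW_space W)"
    and "measure (GW_space W) {\<omega>. \<forall>i\<in>\<omega> []. sh [i] \<omega> \<in> A} =
         (\<Sum>B\<in>UNIV. pmf W B * measure (GW_space W) A ^ card B)"
proof -
  interpret G: prob_space "GW_space W" by (rule GW_prob)
  define C where "C B i = (if i \<in> B then A else UNIV)" for B :: "'a set" and i :: 'a
  have Cs: "C B i \<in> sets (GW_space W)" for B i
    using A sets.top[of "GW_space W"] by (auto simp: C_def space_GW)
  have e: "{\<omega>. \<forall>i\<in>\<omega> []. sh [i] \<omega> \<in> A} = (\<Union>B\<in>UNIV. cyl B (C B))"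
    by (auto simp: cyl_def C_def)
  show "{\<omega>. \<forall>i\<in>\<omega> []. sh [i] \<omega> \<in> A} \<in> sets (GW_space W)"
    unfolding e by (intro sets.finite_UN cyl_sets Cs) auto
  have disj: "disjoint_family_on (\<lambda>B. cyl B (C B)) UNIV"
    by (auto simp: disjoint_family_on_def cyl_def)
  have p: "(\<Prod>i\<in>UNIV. measure (GW_space W) (C B i)) = measure (GW_space W) A ^ card B" for B
  proof -
    have "(\<Prod>i\<in>UNIV. measure (GW_space W) (C B i)) = (\<Prod>i\<in>UNIV. if i \<in> B then measure (GW_space W) A else 1)"
      by (rule prod.cong) (auto simp: C_def G.prob_space[unfolded space_GW])
    also have "\<dots> = measure (GW_space W) A ^ card B"
      by (simp add: prod.If_cases Int_def)
    finally show ?thesis .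
  qed
  show "measure (GW_space W) {\<omega>. \<forall>i\<in>\<omega> []. sh [i] \<omega> \<in> A} =
         (\<Sum>B\<in>UNIV. pmf W B * measure (GW_space W) A ^ card B)"
  proof -
    have fU: "finite (UNIV :: 'a set set)" by simp
    show ?thesis unfolding e cyl_union_measure[OF fU Cs disj] p ..
  qed
qed

lemma ER:
  fixes W :: "'a::finite set pmf"
  assumes A: "A \<in> sets (GW_space W)"
  shows "{\<omega>. R (\<omega> []) {i. sh [i] \<omega> \<in> A}} \<in> sets (GW_space W)"
    and "measure (GW_space W) {\<omega>. R (\<omega> []) {i. sh [i] \<omega> \<in> A}} =
         (\<Sum>B\<in>UNIV. \<Sum>Y\<in>UNIV. if R B Y then pmf W B * (measure (GW_space W) A ^ card Y *
              (1 - measure (GW_space W) A) ^ card (UNIV - Y)) else 0)"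
proof -
  interpret G: prob_space "GW_space W" by (rule GW_prob)
  let ?p = "measure (GW_space W) A"
  define C where "C BY i = (if i \<in> snd BY then A else UNIV - A)" for BY :: "'a set \<times> 'a set" and i
  define K where "K = {BY. R (fst BY) (snd BY)}"
  have Cs: "C BY i \<in> sets (GW_space W)" for BY i
    using A sets.top[of "GW_space W"] by (auto simp: C_def space_GW)
  have e: "{\<omega>. R (\<omega> []) {i. sh [i] \<omega> \<in> A}} = (\<Union>BY\<in>K. cyl (fst BY) (C BY))"
  proof (intro set_eqI iffI)
    fix \<omega> assume "\<omega> \<in> {\<omega>. R (\<omega> []) {i. sh [i] \<omega> \<in> A}}"
    then show "\<omega> \<in> (\<Union>BY\<in>K. cyl (fst BY) (C BY))"
      by (intro UN_I[of "(\<omega> [], {i. sh [i] \<omega> \<in> A})"]) (auto simp: K_def cyl_def C_def)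
  next
    fix \<omega> assume "\<omega> \<in> (\<Union>BY\<in>K. cyl (fst BY) (C BY))"
    then obtain BY where BY: "BY \<in> K" "\<omega> \<in> cyl (fst BY) (C BY)" by blast
    then have "{i. sh [i] \<omega> \<in> A} = snd BY" "\<omega> [] = fst BY"
      by (auto simp: cyl_def C_def split: if_splits)
    then show "\<omega> \<in> {\<omega>. R (\<omega> []) {i. sh [i] \<omega> \<in> A}}" using BY(1) by (simp add: K_def)
  qed
  show "{\<omega>. R (\<omega> []) {i. sh [i] \<omega> \<in> A}} \<in> sets (GW_space W)"
    unfolding e by (intro sets.finite_UN cyl_sets Cs) auto
  have disj: "disjoint_family_on (\<lambda>BY. cyl (fst BY) (C BY)) K"
    unfolding disjoint_family_on_def
  proof (intro ballI impI)
    fix m n assume "m \<in> K" "n \<in> K" "m \<noteq> n"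
    show "cyl (fst m) (C m) \<inter> cyl (fst n) (C n) = {}"
    proof (rule ccontr)
      assume "cyl (fst m) (C m) \<inter> cyl (fst n) (C n) \<noteq> {}"
      then obtain \<omega> where \<omega>: "\<omega> \<in> cyl (fst m) (C m)" "\<omega> \<in> cyl (fst n) (C n)" by blast
      then have "{i. sh [i] \<omega> \<in> A} = snd m" "\<omega> [] = fst m" "{i. sh [i] \<omega> \<in> A} = snd n" "\<omega> [] = fst n"
        by (auto simp: cyl_def C_def split: if_splits)
      then have "m = n" by (simp add: prod_eq_iff)
      then show False using \<open>m \<noteq> n\<close> by simp
    qed
  qed
  have finK: "finite K" by simp
  have p: "(\<Prod>i\<in>UNIV. measure (GW_space W) (C BY i)) = ?p ^ card (snd BY) * (1 - ?p) ^ card (UNIV - snd BY)" for BY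
  proof -
    have "(\<Prod>i\<in>UNIV. measure (GW_space W) (C BY i)) = (\<Prod>i\<in>UNIV. if i \<in> snd BY then ?p else 1 - ?p)"
      by (rule prod.cong) (auto simp: C_def G.prob_compl[OF A, unfolded space_GW])
    also have "\<dots> = ?p ^ card (snd BY) * (1 - ?p) ^ card (UNIV - snd BY)"
      by (simp add: prod.If_cases Int_def Diff_eq)
    finally show ?thesis .
  qed
  have "measure (GW_space W) {\<omega>. R (\<omega> []) {i. sh [i] \<omega> \<in> A}} =
      (\<Sum>BY\<in>K. pmf W (fst BY) * (?p ^ card (snd BY) * (1 - ?p) ^ card (UNIV - snd BY)))"
    unfolding e cyl_union_measure[OF finK Cs disj] p ..
  also have "\<dots> = (\<Sum>BY\<in>UNIV. if BY \<in> K then pmf W (fst BY) * (?p ^ card (snd BY) * (1 - ?p) ^ card (UNIV - snd BY)) else 0)"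
    using sum.inter_restrict[of UNIV _ K] by simp
  also have "\<dots> = (\<Sum>BY\<in>UNIV \<times> UNIV. if R (fst BY) (snd BY) then pmf W (fst BY) * (?p ^ card (snd BY) * (1 - ?p) ^ card (UNIV - snd BY)) else 0)"
    by (simp add: K_def)
  also have "\<dots> = (\<Sum>B\<in>UNIV. \<Sum>Y\<in>UNIV. if R B Y then pmf W B * (?p ^ card Y * (1 - ?p) ^ card (UNIV - Y)) else 0)"
    unfolding sum.cartesian_product by (rule sum.cong) (auto simp: case_prod_beta)
  finally show "measure (GW_space W) {\<omega>. R (\<omega> []) {i. sh [i] \<omega> \<in> A}} =
         (\<Sum>B\<in>UNIV. \<Sum>Y\<in>UNIV. if R B Y then pmf W B * (?p ^ card Y * (1 - ?p) ^ card (UNIV - Y)) else 0)" .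
qed

lemma E2:
  fixes W :: "'a::finite set pmf"
  assumes A: "A \<in> sets (GW_space W)"
  shows "measure (GW_space W) {\<omega>. {i \<in> \<omega> []. sh [i] \<omega> \<in> A} \<notin> up_closure \<A>} =
         g_fun W \<A> (1 - measure (GW_space W) A)"
proof -
  have e: "{\<omega>. {i \<in> \<omega> []. sh [i] \<omega> \<in> A} \<notin> up_closure \<A>} =
           {\<omega>. \<omega> [] \<inter> {i. sh [i] \<omega> \<in> A} \<notin> up_closure \<A>}"
    by (simp add: Int_def)
  show ?thesis unfolding e ER(2)[OF A, where R="\<lambda>B Y. B \<inter> Y \<notin> up_closure \<A>"] g_fun_def thin_weight_def
    by (intro sum.cong refl) simp
qed

lemma E2_sets:
  fixes W :: "'a::finite set pmf"
  assumes A: "A \<in> sets (GW_space W)"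
  shows "{\<omega>. {i \<in> \<omega> []. sh [i] \<omega> \<in> A} \<in> up_closure \<A>} \<in> sets (GW_space W)"
proof -
  have e: "{\<omega>. {i \<in> \<omega> []. sh [i] \<omega> \<in> A} \<in> up_closure \<A>} =
           {\<omega>. \<omega> [] \<inter> {i. sh [i] \<omega> \<in> A} \<in> up_closure \<A>}"
    by (simp add: Int_def)
  show ?thesis unfolding e by (rule ER(1)[OF A, where R="\<lambda>B Y. B \<inter> Y \<in> up_closure \<A>"])
qed



lemma UNIV_sets: "UNIV \<in> sets (GW_space W)"
  using sets.top[of "GW_space W"] by (simp add: space_GW)

lemma good_sets:
  fixes W :: "'a::finite set pmf"
  shows "{\<omega>. good \<A> n \<omega>} \<in> sets (GW_space W)"
proof (induction n)
  case 0
  then show ?case using UNIV_sets by simp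
next
  case (Suc n)
  have "{\<omega>. good \<A> (Suc n) \<omega>} = {\<omega>. {i \<in> \<omega> []. sh [i] \<omega> \<in> {\<omega>. good \<A> n \<omega>}} \<in> up_closure \<A>}"
    by simp
  then show ?case using E2_sets[OF Suc] by simp
qed

lemma intree_sets:
  fixes W :: "'a::finite set pmf"
  shows "{\<omega>. intree \<omega> v} \<in> sets (GW_space W)"
proof (induction v)
  case Nil
  then show ?case using UNIV_sets by simp
next
  case (Cons i v)
  have "{\<omega>. intree \<omega> (i # v)} = {\<omega>. i \<in> \<omega> []} \<inter> {\<omega>. sh [i] \<omega> \<in> {\<omega>. intree \<omega> v}}"
    by auto
  then show ?case using pred_sets sh_sets[OF Cons] by (metis sets.Int)
qed

lemma Good_sh_sets:
  fixes W :: "'a::finite set pmf"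
  shows "{\<omega>. \<not> Good \<A> (sh v \<omega>)} \<in> sets (GW_space W)"
proof -
  have "{\<omega>. \<not> Good \<A> \<omega>} = (\<Union>n. {\<omega>. \<not> good \<A> n \<omega>})" by (auto simp: Good_def)
  moreover have "{\<omega>. \<not> good \<A> n \<omega>} \<in> sets (GW_space W)" for n
  proof -
    have "{\<omega>. \<not> good \<A> n \<omega>} = UNIV - {\<omega>. good \<A> n \<omega>}" by auto
    then show ?thesis using good_sets UNIV_sets by (metis sets.Diff)
  qed
  ultimately have "{\<omega>. \<not> Good \<A> \<omega>} \<in> sets (GW_space W)" by auto
  then show ?thesis using sh_sets by fastforce
qed

definition Nset :: "'a set set \<Rightarrow> ('a list \<Rightarrow> 'a set) set" where
  "Nset \<A> = {\<omega>. \<forall>v. intree \<omega> v \<longrightarrow> \<not> Good \<A> (sh v \<omega>)}"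

lemma Nset_sets:
  fixes W :: "'a::finite set pmf"
  shows "Nset \<A> \<in> sets (GW_space W)"
proof -
  have e: "Nset \<A> = (\<Inter>v\<in>UNIV. (UNIV - {\<omega>. intree \<omega> v}) \<union> {\<omega>. \<not> Good \<A> (sh v \<omega>)})"
    by (auto simp: Nset_def)
  have "(UNIV - {\<omega>. intree \<omega> v}) \<union> {\<omega>. \<not> Good \<A> (sh v \<omega>)} \<in> sets (GW_space W)" for v
    using UNIV_sets intree_sets Good_sh_sets by (metis sets.Diff sets.Un)
  then show ?thesis unfolding e by (intro sets.countable_INT) auto
qed

definition Dn :: "nat \<Rightarrow> ('a list \<Rightarrow> 'a set) set" where
  "Dn n = {\<omega>. GW_gen \<omega> n = {}}"

lemma Dn_eq: "Dn n = {\<omega>. \<forall>v. length v = n \<longrightarrow> \<not> intree \<omega> v}"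
  by (auto simp: Dn_def GW_gen_eq)

lemma Dn_sets:
  fixes W :: "'a::finite set pmf"
  shows "Dn n \<in> sets (GW_space W)"
proof -
  have e: "Dn n = (\<Inter>v\<in>UNIV. {\<omega>. length v = n \<longrightarrow> \<not> intree \<omega> v})"
    by (auto simp: Dn_eq)
  have "{\<omega>. length v = n \<longrightarrow> \<not> intree \<omega> v} \<in> sets (GW_space W)" for v
  proof (cases "length v = n")
    case True
    then have "{\<omega>. length v = n \<longrightarrow> \<not> intree \<omega> v} = UNIV - {\<omega>. intree \<omega> v}" by auto
    then show ?thesis using UNIV_sets intree_sets by (metis sets.Diff)
  next
    case False
    then show ?thesis using UNIV_sets by simp
  qed
  then show ?thesis unfolding e by (intro sets.countable_INT) auto
qed

lemma Dn_0: "Dn 0 = {}"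
  by (auto simp: Dn_def)

lemma Dn_Suc: "Dn (Suc n) = {\<omega> :: 'a list \<Rightarrow> 'a set. \<forall>i\<in>\<omega> []. sh [i] \<omega> \<in> Dn n}"
proof (intro set_eqI iffI)
  fix \<omega> :: "'a list \<Rightarrow> 'a set" assume "\<omega> \<in> Dn (Suc n)"
  then have h: "\<And>v. length v = Suc n \<Longrightarrow> \<not> intree \<omega> v" by (simp add: Dn_eq)
  show "\<omega> \<in> {\<omega>. \<forall>i\<in>\<omega> []. sh [i] \<omega> \<in> Dn n}"
  proof (simp, intro ballI)
    fix i assume i: "i \<in> \<omega> []"
    show "sh [i] \<omega> \<in> Dn n" unfolding Dn_eq
    proof (intro CollectI allI impI)
      fix w :: "'a list" assume "length w = n"
      then show "\<not> intree (sh [i] \<omega>) w" using h[of "i # w"] i by simp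
    qed
  qed
next
  fix \<omega> :: "'a list \<Rightarrow> 'a set" assume "\<omega> \<in> {\<omega>. \<forall>i\<in>\<omega> []. sh [i] \<omega> \<in> Dn n}"
  then have h: "\<And>i w. i \<in> \<omega> [] \<Longrightarrow> length w = n \<Longrightarrow> \<not> intree (sh [i] \<omega>) w" by (simp add: Dn_eq)
  show "\<omega> \<in> Dn (Suc n)" unfolding Dn_eq
  proof (intro CollectI allI impI)
    fix v :: "'a list" assume "length v = Suc n"
    then obtain i w where "v = i # w" "length w = n" by (cases v) auto
    then show "\<not> intree \<omega> v" using h by auto
  qed
qed

lemma Dn_mono: "Dn n \<subseteq> Dn (Suc n)"
  by (auto simp: Dn_def)

lemma incseq_Dn: "incseq Dn"
  by (rule incseq_SucI) (rule Dn_mono)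

lemma D_eq: "{\<omega>. \<not> nonextinct \<omega>} = (\<Union>n. Dn n)"
  by (auto simp: nonextinct_def Dn_def)

lemma D_sub_N:
  fixes \<A> :: "'a set set"
  assumes ne: "\<And>X. X \<in> \<A> \<Longrightarrow> X \<noteq> {}"
  shows "Dn n \<subseteq> Nset \<A>"
proof
  fix \<omega> :: "'a list \<Rightarrow> 'a set" assume "\<omega> \<in> Dn n"
  then have h: "\<And>v. length v = n \<Longrightarrow> \<not> intree \<omega> v" by (simp add: Dn_eq)
  show "\<omega> \<in> Nset \<A>" unfolding Nset_def
  proof (intro CollectI allI impI notI)
    fix v assume v: "intree \<omega> v" and G: "Good \<A> (sh v \<omega>)"
    then have "good \<A> n (sh v \<omega>)" by (simp add: Good_def)
    then obtain w where w: "length w = n" "intree (sh v \<omega>) w" using good_nonempty[OF ne] by blast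
    then have t: "intree \<omega> (v @ w)" using v by (simp add: along_append)
    have "v @ w = take n (v @ w) @ drop n (v @ w)" by (rule append_take_drop_id[symmetric])
    then have "intree \<omega> (take n (v @ w))" using t along_append by metis
    moreover have "length (take n (v @ w)) = n" using w by simp
    ultimately show False using h by blast
  qed
qed

lemma N_sub_notGood: "Nset \<A> \<subseteq> {\<omega>. \<not> Good \<A> \<omega>}"
  unfolding Nset_def by (auto dest: spec[of _ "[]"])

lemma N_inherit: "Nset \<A> \<subseteq> {\<omega>. \<forall>i\<in>\<omega> []. sh [i] \<omega> \<in> Nset \<A>}"
proof (intro subsetI CollectI ballI)
  fix \<omega> i assume \<omega>: "\<omega> \<in> Nset \<A>" and i: "i \<in> \<omega> []"
  show "sh [i] \<omega> \<in> Nset \<A>" unfolding Nset_def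
  proof (intro CollectI allI impI)
    fix v assume "intree (sh [i] \<omega>) v"
    then have "intree \<omega> (i # v)" using i by simp
    then have "\<not> Good \<A> (sh (i # v) \<omega>)" using \<omega> unfolding Nset_def by blast
    then show "\<not> Good \<A> (sh v (sh [i] \<omega>))" by simp
  qed
qed



theorem corollary2p12:
  fixes W :: "'a::finite set pmf" and \<A> :: "'a set set"
  assumes pos: "\<And>i. measure_pmf.prob W {B. i \<in> B} > 0"
    and supercrit: "measure_pmf.expectation W (\<lambda>B. real (card B)) > 1"
    and A_ne: "\<A> \<noteq> {}"
    and A_elems_ne: "\<And>X. X \<in> \<A> \<Longrightarrow> X \<noteq> {}"
    and fixpt: "\<exists>s\<in>{0..1::real}. s < 1 \<and> g_fun W \<A> s = s"
  shows "AE \<omega> in GW_space W. nonextinct \<omega> \<longrightarrow>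
           infinite {v \<in> GW_tree \<omega>. \<exists>S'. is_A_subtree \<A> (subtree_at (GW_tree \<omega>) v) S'}"
proof -
  interpret G: prob_space "GW_space W" by (rule GW_prob)
  obtain s0 where s0: "0 \<le> s0" "s0 \<le> 1" "s0 < 1" "g_fun W \<A> s0 = s0" using fixpt by auto
  define f where "f y = (\<Sum>B\<in>UNIV. pmf W B * y ^ card B)" for y :: real
  have q: "measure (GW_space W) {\<omega>. \<not> good \<A> n \<omega>} \<le> s0" for n
  proof (induction n)
    case 0
    then show ?case using s0 by simp
  next
    case (Suc n)
    have e: "{\<omega>. \<not> good \<A> (Suc n) \<omega>} = {\<omega>. {i \<in> \<omega> []. sh [i] \<omega> \<in> {\<omega>. good \<A> n \<omega>}} \<notin> up_closure \<A>}"
      by simp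
    have c: "1 - measure (GW_space W) {\<omega>. good \<A> n \<omega>} = measure (GW_space W) {\<omega>. \<not> good \<A> n \<omega>}"
    proof -
      have "space (GW_space W) - {\<omega>. good \<A> n \<omega>} = {\<omega>. \<not> good \<A> n \<omega>}" by (auto simp: space_GW)
      then show ?thesis using G.prob_compl[OF good_sets[of \<A> n W]] by simp
    qed
    have "measure (GW_space W) {\<omega>. \<not> good \<A> (Suc n) \<omega>} = g_fun W \<A> (measure (GW_space W) {\<omega>. \<not> good \<A> n \<omega>})"
      unfolding e E2[OF good_sets] c ..
    also have "\<dots> \<le> g_fun W \<A> s0"
      by (rule g_fun_mono) (use Suc s0 in auto)
    finally show ?case using s0 by simp
  qed
  have notGood_sets: "{\<omega>. \<not> Good \<A> \<omega>} \<in> sets (GW_space W)"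
    using Good_sh_sets[of \<A> "[]" W] by simp
  have notGood: "measure (GW_space W) {\<omega>. \<not> Good \<A> \<omega>} \<le> s0"
  proof -
    have e: "{\<omega>. \<not> Good \<A> \<omega>} = (\<Union>n. {\<omega>. \<not> good \<A> n \<omega>})" by (auto simp: Good_def)
    have ns: "{\<omega>. \<not> good \<A> n \<omega>} \<in> sets (GW_space W)" for n
    proof -
      have "{\<omega>. \<not> good \<A> n \<omega>} = UNIV - {\<omega>. good \<A> n \<omega>}" by auto
      then show ?thesis using good_sets UNIV_sets by (metis sets.Diff)
    qed
    have inc: "incseq (\<lambda>n. {\<omega>. \<not> good \<A> n \<omega>})"
      by (rule incseq_SucI) (use good_Suc_imp in blast)
    have "(\<lambda>n. measure (GW_space W) {\<omega>. \<not> good \<A> n \<omega>}) \<longlonglongrightarrow> measure (GW_space W) (\<Union>n. {\<omega>. \<not> good \<A> n \<omega>})"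
      by (rule G.finite_Lim_measure_incseq[OF _ inc]) (auto intro: ns)
    then show ?thesis unfolding e by (rule LIMSEQ_le_const2) (use q in auto)
  qed
  define x where "x = measure (GW_space W) (Nset \<A>)"
  have x0: "0 \<le> x" by (simp add: x_def)
  have x1: "x < 1"
  proof -
    have "x \<le> measure (GW_space W) {\<omega>. \<not> Good \<A> \<omega>}"
      unfolding x_def by (rule G.finite_measure_mono[OF N_sub_notGood notGood_sets])
    then show ?thesis using notGood s0 by simp
  qed
  have xf: "x \<le> f x"
  proof -
    have "x \<le> measure (GW_space W) {\<omega>. \<forall>i\<in>\<omega> []. sh [i] \<omega> \<in> Nset \<A>}"
      unfolding x_def by (rule G.finite_measure_mono[OF N_inherit E1(1)[OF Nset_sets]])
    also have "\<dots> = f x" unfolding E1(2)[OF Nset_sets] f_def x_def ..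
    finally show ?thesis .
  qed
  define d where "d = measure (GW_space W) (\<Union>n. Dn n)"
  have d0: "0 \<le> d" by (simp add: d_def)
  have dlim: "(\<lambda>n. measure (GW_space W) (Dn n)) \<longlonglongrightarrow> d"
    unfolding d_def by (rule G.finite_Lim_measure_incseq[OF _ incseq_Dn]) (auto intro: Dn_sets)
  have dSuc: "measure (GW_space W) (Dn (Suc n)) = f (measure (GW_space W) (Dn n))" for n
    unfolding Dn_Suc E1(2)[OF Dn_sets] f_def ..
  have fd: "f d = d"
  proof -
    have "(\<lambda>n. f (measure (GW_space W) (Dn n))) \<longlonglongrightarrow> f d"
      unfolding f_def by (intro tendsto_intros dlim)
    moreover have "(\<lambda>n. f (measure (GW_space W) (Dn n))) \<longlonglongrightarrow> d"
      unfolding dSuc[symmetric] by (rule LIMSEQ_Suc[OF dlim])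
    ultimately show ?thesis by (rule LIMSEQ_unique)
  qed
  obtain b where b: "pmf W b > 0" "card b \<ge> 2"
  proof (rule ccontr)
    assume "\<not> thesis"
    then have h: "\<And>B. pmf W B > 0 \<Longrightarrow> card B < 2" using that by force
    have "measure_pmf.expectation W (\<lambda>B. real (card B)) = (\<Sum>B\<in>UNIV. real (card B) * pmf W B)"
      by (rule integral_measure_pmf_real) auto
    also have "\<dots> \<le> (\<Sum>B\<in>UNIV. pmf W B)"
    proof (rule sum_mono)
      fix B :: "'a set"
      show "real (card B) * pmf W B \<le> pmf W B"
      proof (cases "pmf W B > 0")
        case True
        then have "card B \<le> 1" using h[OF True] by simp
        then show ?thesis using True by (simp add: mult_le_cancel_right1)
      next
        case False
        then have "pmf W B = 0" using pmf_nonneg[of W B] by simp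
        then show ?thesis by simp
      qed
    qed
    also have "\<dots> = 1" by (rule sum_pmf_eq_1) auto
    finally show False using supercrit by simp
  qed
  have xd: "x \<le> d"
  proof (rule gen_fun_fixpoint[of UNIV "pmf W" b card x d])
    show "(\<Sum>B\<in>UNIV. pmf W B) = 1" by (rule sum_pmf_eq_1) auto
    show "x \<le> (\<Sum>B\<in>UNIV. pmf W B * x ^ card B)" using xf by (simp add: f_def)
    show "(\<Sum>B\<in>UNIV. pmf W B * d ^ card B) = d" using fd by (simp add: f_def)
  qed (use b x0 x1 d0 in auto)
  have DN: "(\<Union>n. Dn n) \<subseteq> Nset \<A>" using D_sub_N[OF A_elems_ne] by blast
  have Dsets: "(\<Union>n. Dn n) \<in> sets (GW_space W)" by (intro sets.countable_UN) (auto intro: Dn_sets)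
  have null: "Nset \<A> - (\<Union>n. Dn n) \<in> null_sets (GW_space W)"
  proof -
    have ms: "Nset \<A> - (\<Union>n. Dn n) \<in> sets (GW_space W)" using Nset_sets Dsets by (rule sets.Diff)
    have "measure (GW_space W) (Nset \<A> - (\<Union>n. Dn n)) = x - d"
      unfolding x_def d_def by (rule G.finite_measure_Diff[OF Nset_sets Dsets DN])
    then have "measure (GW_space W) (Nset \<A> - (\<Union>n. Dn n)) = 0"
      using xd measure_nonneg[of "GW_space W" "Nset \<A> - (\<Union>n. Dn n)"] by linarith
    then show ?thesis using ms by (simp add: G.emeasure_eq_measure null_sets_def)
  qed
  show ?thesis
  proof (rule AE_I'[OF null], intro subsetI)
    fix \<omega> assume "\<omega> \<in> {\<omega> \<in> space (GW_space W). \<not> (nonextinct \<omega> \<longrightarrow>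
           infinite {v \<in> GW_tree \<omega>. \<exists>S'. is_A_subtree \<A> (subtree_at (GW_tree \<omega>) v) S'})}"
    then have ne: "nonextinct \<omega>" and fin: "finite {v \<in> GW_tree \<omega>. \<exists>S'. is_A_subtree \<A> (subtree_at (GW_tree \<omega>) v) S'}"
      by auto
    have "\<omega> \<notin> (\<Union>n. Dn n)" using ne D_eq by blast
    moreover have "\<omega> \<in> Nset \<A>" unfolding Nset_def
    proof (intro CollectI allI impI notI)
      fix v assume v: "intree \<omega> v" and G: "Good \<A> (sh v \<omega>)"
      have "is_A_subtree \<A> (subtree_at (GW_tree \<omega>) v) {w. along (Xch \<A>) (sh v \<omega>) w}"
        unfolding subtree_at_GW[OF v] by (rule Good_subtree[OF G])
      then have "infinite {v \<in> GW_tree \<omega>. \<exists>S'. is_A_subtree \<A> (subtree_at (GW_tree \<omega>) v) S'}"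
        by (rule infinite_good_set) (rule A_elems_ne)
      then show False using fin by simp
    qed
    ultimately show "\<omega> \<in> Nset \<A> - (\<Union>n. Dn n)" by simp
  qed
qed

end
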